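(* Let $U:\mathbb{R}^d\to\mathbb{R}$ satisfy: (A1) $U$ is continuously differentiable and $\|\nabla U(x)-\nabla U(y)\|_2\le L\|x-y\|_2$ for all $x,y$, for some $L>0$; (A3) there exist $m,R>0$ such that for all $x,y\in\mathbb{R}^d$ with $\|x-y\|_2>R$, $\langle\nabla U(x)-\nabla U(y),x-y\rangle\ge m\|x-y\|_2^2$. Let $\kappa=L/m$ and $c=1000$. Let $x,y,w\in\mathbb{R}^d$, $z=x-y$, and $\nabla=\nabla U(x)-\nabla U(y)$. If $\|z\|_2^2+\|z+w\|_2^2\ge2.2R^2$, then $$\left\langle\begin{pmatrix}z\\ z+w\end{pmatrix},\begin{pmatrix}w\\ -w-\frac1{c\kappa L}\nabla\end{pmatrix}\right\rangle\le-\frac1{3(c\kappa)^2}\big(\|z\|_2^2+\|z+w\|_2^2\big).$$ *)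

theory Defs
  imports "HOL-Analysis.Analysis"
begin

end

theory Submission
  imports Defs
begin

lemma lin_aux: "\<lbrakk>(Y::real) \<le> 2*X + 2*Q; Q \<le> T/2; 0 \<le> X; 0 \<le> T; a \<le> -1000*X; b \<le> P; P \<le> T/2 + X/2\<rbrakk> \<Longrightarrow> -T + a + b \<le> - X/3 - Y/3"
  by linarith

lemma lin_aux2: "\<lbrakk>(a::real) \<le> U; U \<le> (1/1000) * (121 * T); b \<le> V; V \<le> (1/1000) * (11 * T); W \<le> (1/1000000) * (265 * T); 0 \<le> T\<rbrakk> \<Longrightarrow> -T + a + b \<le> - W/3"
  by linarith

theorem lemma16:
  fixes U :: "'a::euclidean_space \<Rightarrow> real"
    and gradU :: "'a \<Rightarrow> 'a"
    and L m R :: real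
    and x y w :: 'a
  assumes grad: "\<And>v. (U has_derivative (\<lambda>h. gradU v \<bullet> h)) (at v)"
    and cont_grad: "continuous_on UNIV gradU"
    and L_pos: "L > 0"
    and lip: "\<And>u v. norm (gradU u - gradU v) \<le> L * norm (u - v)"
    and m_pos: "m > 0" and R_pos: "R > 0"
    and far_convex: "\<And>u v. norm (u - v) > R \<Longrightarrow>
           inner (gradU u - gradU v) (u - v) \<ge> m * (norm (u - v))\<^sup>2"
    and big: "(norm (x - y))\<^sup>2 + (norm ((x - y) + w))\<^sup>2 \<ge> 2.2 * R\<^sup>2"
  shows "let \<kappa> = L / m; c = (1000::real); z = x - y; g = gradU x - gradU y in
           inner z w + inner (z + w) (- w - (1 / (c * \<kappa> * L)) *\<^sub>R g)
           \<le> - (1 / (3 * (c * \<kappa>)\<^sup>2)) * ((norm z)\<^sup>2 + (norm (z + w))\<^sup>2)"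
proof -
  have mL: "m \<le> L"
  proof -
    obtain e :: 'a where e: "e \<in> Basis" using nonempty_Basis by blast
    define u where "u = (2*R) *\<^sub>R e"
    have nu: "norm (u - 0) = 2*R" using e R_pos by (simp add: u_def)
    then have "inner (gradU u - gradU 0) (u - 0) \<ge> m * (2*R)\<^sup>2"
      using far_convex[of u 0] R_pos by simp
    moreover have "inner (gradU u - gradU 0) (u - 0) \<le> norm (gradU u - gradU 0) * norm (u - 0)"
      by (rule norm_cauchy_schwarz)
    moreover have "norm (gradU u - gradU 0) * norm (u - 0) \<le> L * norm (u-0) * norm (u - 0)"
      using lip[of u 0] by (intro mult_right_mono) auto
    ultimately have "m * (2*R)\<^sup>2 \<le> L * (2*R) * (2*R)" unfolding nu by linarith
    then have "m * (2*R)\<^sup>2 \<le> L * (2*R)\<^sup>2" by (simp add: power2_eq_square)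
    then show ?thesis using R_pos by simp
  qed
  define z where "z = x - y"
  define g where "g = gradU x - gradU y"
  define s where "s = norm z"
  define t where "t = norm w"
  define p where "p = norm (z + w)"
  define A where "A = inner z g"
  define B where "B = inner w g"
  define q where "q = m / (1000 * L)"
  have ng: "norm g \<le> L * s" using lip[of x y] by (simp add: g_def s_def z_def)
  have s0: "s \<ge> 0" "t \<ge> 0" "p \<ge> 0" by (auto simp: s_def t_def p_def)
  have Bb: "\<bar>B\<bar> \<le> L * s * t"
  proof -
    have "\<bar>B\<bar> \<le> t * norm g" unfolding B_def t_def by (rule Cauchy_Schwarz_ineq2)
    also have "\<dots> \<le> t * (L * s)" using ng s0 by (simp add: mult_left_mono)
    finally show ?thesis by (simp add: algebra_simps)
  qed
  have Ab: "A \<ge> - (L * s * s)"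
  proof -
    have "\<bar>A\<bar> \<le> s * norm g" unfolding A_def s_def by (rule Cauchy_Schwarz_ineq2)
    also have "\<dots> \<le> s * (L * s)" using ng s0 by (simp add: mult_left_mono)
    finally show ?thesis by (simp add: algebra_simps)
  qed
  have pt: "p \<le> s + t" unfolding p_def s_def t_def by (rule norm_triangle_ineq)
  have bigs: "s\<^sup>2 + p\<^sup>2 \<ge> 2.2 * R\<^sup>2" using big by (simp add: s_def p_def z_def)
  have q0: "q > 0" "q \<le> 1/1000" using mL m_pos L_pos by (auto simp: q_def field_simps)
  have expand: "inner z w + inner (z + w) (- w - (1 / (1000 * (L/m) * L)) *\<^sub>R g)
      = - t\<^sup>2 - (q / L) * A - (q / L) * B"
    using m_pos L_pos
    by (simp add: A_def B_def t_def q_def inner_add_left inner_add_right inner_diff_right inner_minus_right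
        power2_norm_eq_inner inner_commute field_simps)
  have rhs: "1 / (3 * (1000 * (L/m))\<^sup>2) = q\<^sup>2 / 3"
    using m_pos L_pos by (simp add: q_def field_simps power2_eq_square)
  have qB: "- (q / L) * B \<le> q * s * t"
  proof -
    have "- (q/L) * B \<le> (q/L) * \<bar>B\<bar>" using q0 L_pos by (simp add: abs_if divide_nonneg_pos)
    also have "\<dots> \<le> (q/L) * (L * s * t)" using Bb q0 L_pos by (intro mult_left_mono) auto
    finally show ?thesis using L_pos by simp
  qed
  have main: "- t\<^sup>2 - (q / L) * A - (q / L) * B \<le> - (q\<^sup>2/3) * (s\<^sup>2 + p\<^sup>2)"
  proof (cases "s > R")
    case True
    have "A \<ge> m * s\<^sup>2" using far_convex[of x y] True by (simp add: A_def z_def g_def s_def inner_commute)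
    then have "(q/L) * A \<ge> (q/L) * (m * s\<^sup>2)" using q0 L_pos by (intro mult_left_mono) auto
    moreover have "(q/L) * (m * s\<^sup>2) = 1000 * q\<^sup>2 * s\<^sup>2"
      using m_pos L_pos by (simp add: q_def field_simps power2_eq_square)
    ultimately have qA: "- (q/L) * A \<le> - 1000 * q\<^sup>2 * s\<^sup>2" by simp
    have am: "q * s * t \<le> t\<^sup>2/2 + q\<^sup>2 * s\<^sup>2 / 2"
      using sum_squares_ge_zero[of "q* s - t" 0]
      by (simp add: power2_eq_square algebra_simps)
    have "p\<^sup>2 \<le> (s+t)\<^sup>2" using pt s0 by (intro power_mono) auto
    also have "\<dots> \<le> 2* s\<^sup>2 + 2*t\<^sup>2" using sum_squares_ge_zero[of "s - t" 0]
      by (simp add: power2_eq_square algebra_simps)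
    finally have "q\<^sup>2 * p\<^sup>2 \<le> q\<^sup>2 * (2* s\<^sup>2 + 2*t\<^sup>2)" by (intro mult_left_mono) auto
    moreover have "q\<^sup>2 * t\<^sup>2 \<le> t\<^sup>2 / 2"
    proof -
      have "q\<^sup>2 \<le> (1/1000)\<^sup>2" using q0 by (intro power_mono) auto
      then have "q\<^sup>2 \<le> 1/2" by (simp add: power2_eq_square)
      then show ?thesis using mult_right_mono[of "q\<^sup>2" "1/2" "t\<^sup>2"] by simp
    qed
    moreover have "q\<^sup>2 * s\<^sup>2 \<ge> 0" by simp
    moreover have "- (q\<^sup>2/3) * (s\<^sup>2 + p\<^sup>2) = - (q\<^sup>2 * s\<^sup>2)/3 - (q\<^sup>2 * p\<^sup>2)/3" by (simp add: algebra_simps)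
    moreover have "q\<^sup>2 * (2* s\<^sup>2 + 2*t\<^sup>2) = 2*(q\<^sup>2 * s\<^sup>2) + 2*(q\<^sup>2 * t\<^sup>2)" by (simp add: algebra_simps)
    moreover have "- 1000 * q\<^sup>2 * s\<^sup>2 = - 1000 * (q\<^sup>2 * s\<^sup>2)" by simp
    moreover have "- (q / L) * A = - ((q / L) * A)" "- (q / L) * B = - ((q / L) * B)" by simp_all
    moreover have "t\<^sup>2 \<ge> 0" by simp
    ultimately have "q\<^sup>2 * p\<^sup>2 \<le> 2 * (q\<^sup>2 * s\<^sup>2) + 2 * (q\<^sup>2 * t\<^sup>2)" "q\<^sup>2 * t\<^sup>2 \<le> t\<^sup>2 / 2" by simp_all
    note hh = this
    have "- t\<^sup>2 + - (q / L) * A + - (q / L) * B \<le> - (q\<^sup>2 * s\<^sup>2)/3 - (q\<^sup>2 * p\<^sup>2)/3"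
      by (rule lin_aux[of "q\<^sup>2 * p\<^sup>2" "q\<^sup>2 * s\<^sup>2" "q\<^sup>2 * t\<^sup>2" "t\<^sup>2" "- (q / L) * A" "- (q / L) * B" "q * s * t"])
        (use hh qA qB am in simp_all)
    then show ?thesis by (simp add: algebra_simps)
  next
    case False
    then have sR: "s \<le> R" by simp
    have s11: "s \<le> 11 * t"
    proof (rule ccontr)
      assume "\<not> ?thesis"
      then have ts: "t < s / 11" by simp
      have "p\<^sup>2 \<le> (s+t)\<^sup>2" using pt s0 by (intro power_mono) auto
      also have "\<dots> \<le> (12/11 * s)\<^sup>2" using ts s0 by (intro power_mono) auto
      finally have "p\<^sup>2 \<le> 144/121 * s\<^sup>2" by (simp add: power2_eq_square)
      moreover have "s\<^sup>2 \<le> R\<^sup>2" using sR s0 by (intro power_mono) auto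
      moreover have "s\<^sup>2 \<ge> 0" by simp
      moreover have "R\<^sup>2 > 0" using R_pos by simp
      ultimately have "s\<^sup>2 + p\<^sup>2 < 2.2 * R\<^sup>2" by linarith
      then show False using bigs by simp
    qed
    have qA: "- (q/L) * A \<le> q * s\<^sup>2"
    proof -
      have "- (q/L) * A = (q/L) * (-A)" by simp
      also have "\<dots> \<le> (q/L) * (L * s * s)" using Ab q0 L_pos by (intro mult_left_mono) auto
      finally show ?thesis using L_pos by (simp add: power2_eq_square)
    qed
    have ss: "s\<^sup>2 \<le> 121 * t\<^sup>2"
    proof -
      have "s\<^sup>2 \<le> (11*t)\<^sup>2" using s11 s0 by (intro power_mono) auto
      then show ?thesis by (simp add: power2_eq_square)
    qed
    have st: "s * t \<le> 11 * t\<^sup>2" using s11 s0 mult_right_mono[of s "11*t" t]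
      by (simp add: power2_eq_square)
    have pp: "p\<^sup>2 \<le> 144 * t\<^sup>2"
    proof -
      have "p\<^sup>2 \<le> (12*t)\<^sup>2" using pt s11 s0 by (intro power_mono) auto
      then show ?thesis by (simp add: power2_eq_square)
    qed
    have "q * s\<^sup>2 \<le> (1/1000) * (121 * t\<^sup>2)" using q0 ss by (intro mult_mono) auto
    moreover have "q * (s * t) \<le> (1/1000) * (11 * t\<^sup>2)" using q0 st s0 by (intro mult_mono[of q "1/1000" "s * t" "11 * t\<^sup>2"]) auto
    moreover have "q\<^sup>2 * (s\<^sup>2 + p\<^sup>2) \<le> (1/1000000) * (265 * t\<^sup>2)"
    proof -
      have "q\<^sup>2 \<le> (1/1000)\<^sup>2" using q0 by (intro power_mono) auto
      then have "q\<^sup>2 \<le> 1/1000000" by (simp add: power2_eq_square)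
      moreover have "s\<^sup>2 + p\<^sup>2 \<le> 265 * t\<^sup>2" using ss pp by linarith
      ultimately show ?thesis by (intro mult_mono) auto
    qed
    moreover have "t\<^sup>2 \<ge> 0" by simp
    ultimately have "- t\<^sup>2 + - (q / L) * A + - (q / L) * B \<le> - (q\<^sup>2 * (s\<^sup>2 + p\<^sup>2))/3"
      using qA qB
      by (intro lin_aux2[of _ "q * s\<^sup>2" _ _ "q * (s * t)"]) (simp_all add: mult.assoc)
    moreover have "- (q\<^sup>2/3) * (s\<^sup>2 + p\<^sup>2) = - (q\<^sup>2 * (s\<^sup>2 + p\<^sup>2))/3" by simp
    moreover have "- t\<^sup>2 - q/L*A - q/L*B = - t\<^sup>2 + - (q / L) * A + - (q / L) * B" by simp
    ultimately show ?thesis by linarith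
  qed
  show ?thesis
    unfolding Let_def z_def[symmetric] g_def[symmetric] expand rhs
    using main by (simp add: s_def p_def)
qed

end
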